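(* Let $\mathrm{M}=\langle e_1+I,\ e_2+I,\ -I\rangle$, where $e_1,e_2$ are the standard basis vectors of $E^2$. Then $\Omega:\mathrm{Aff}(\mathrm{M})\to\mathrm{Out}(\mathrm{M})$ is an isomorphism.
   Context: Affine maps of $E^2$ are written $a+A$ ($x\mapsto a+Ax$); $a+I$ is translation by $a$. For a 2-space group $\mathrm{M}$, let $N_A(\mathrm{M})$ be its normalizer in the affine group of $E^2$. Each $a+A\in N_A(\mathrm{M})$ induces an affinity $(a+A)_\star:\mathrm{M}x\mapsto\mathrm{M}(a+Ax)$ of the flat orbifold $E^2/\mathrm{M}$; $\mathrm{Aff}(\mathrm{M})$ is the group of all such affinities. $\Omega:\mathrm{Aff}(\mathrm{M})\to\mathrm{Out}(\mathrm{M})$ sends $(a+A)_\star$ to the outer automorphism class of the automorphism $g\mapsto (a+A)g(a+A)^{-1}$ of $\mathrm{M}$. *)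

theory Defs
  imports "HOL-Analysis.Analysis" "HOL-Algebra.Algebra"
begin

definition aff :: "real^2 \<Rightarrow> real^2^2 \<Rightarrow> (real^2 \<Rightarrow> real^2)" where
  "aff a A = (\<lambda>x. a + A *v x)"

definition AffGroup :: "(real^2 \<Rightarrow> real^2) monoid" where
  "AffGroup = \<lparr>carrier = {aff a A | a A. invertible A}, mult = (\<circ>), one = id\<rparr>"

definition e1 :: "real^2" where "e1 = axis 1 1"
definition e2 :: "real^2" where "e2 = axis 2 1"

definition Mp2 :: "(real^2 \<Rightarrow> real^2) set" where
  "Mp2 = generate AffGroup {aff e1 (mat 1), aff e2 (mat 1), aff 0 (- mat 1)}"

definition MGroup :: "(real^2 \<Rightarrow> real^2) set \<Rightarrow> (real^2 \<Rightarrow> real^2) monoid" where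
  "MGroup M = AffGroup\<lparr>carrier := M\<rparr>"

definition normalizerA :: "(real^2 \<Rightarrow> real^2) set \<Rightarrow> (real^2 \<Rightarrow> real^2) set" where
  "normalizerA M = {g \<in> carrier AffGroup.
      (\<lambda>m. g \<otimes>\<^bsub>AffGroup\<^esub> m \<otimes>\<^bsub>AffGroup\<^esub> inv\<^bsub>AffGroup\<^esub> g) ` M = M}"

definition orbitM :: "(real^2 \<Rightarrow> real^2) set \<Rightarrow> real^2 \<Rightarrow> (real^2) set" where
  "orbitM M x = {m x | m. m \<in> M}"

definition Orbits :: "(real^2 \<Rightarrow> real^2) set \<Rightarrow> (real^2) set set" where
  "Orbits M = range (orbitM M)"

text \<open>Induced affinity (a+A)_* : Mx |-> M(a+Ax).\<close>
definition induced :: "(real^2 \<Rightarrow> real^2) set \<Rightarrow> (real^2 \<Rightarrow> real^2) \<Rightarrow> ((real^2) set \<Rightarrow> (real^2) set)" where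
  "induced M g = (\<lambda>Q \<in> Orbits M. orbitM M (g (SOME x. x \<in> Q)))"

definition AffOrb :: "(real^2 \<Rightarrow> real^2) set \<Rightarrow> ((real^2) set \<Rightarrow> (real^2) set) monoid" where
  "AffOrb M = \<lparr>carrier = induced M ` normalizerA M,
               mult = (\<lambda>\<phi> \<psi>. compose (Orbits M) \<phi> \<psi>),
               one = (\<lambda>Q \<in> Orbits M. Q)\<rparr>"

definition Inn :: "('a, 'b) monoid_scheme \<Rightarrow> ('a \<Rightarrow> 'a) set" where
  "Inn G = {(\<lambda>x \<in> carrier G. h \<otimes>\<^bsub>G\<^esub> x \<otimes>\<^bsub>G\<^esub> inv\<^bsub>G\<^esub> h) | h. h \<in> carrier G}"

definition Out :: "('a, 'b) monoid_scheme \<Rightarrow> ('a \<Rightarrow> 'a) set monoid" where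
  "Out G = AutoGroup G Mod Inn G"

definition conjAut :: "(real^2 \<Rightarrow> real^2) set \<Rightarrow> (real^2 \<Rightarrow> real^2) \<Rightarrow> ((real^2 \<Rightarrow> real^2) \<Rightarrow> (real^2 \<Rightarrow> real^2))" where
  "conjAut M g = (\<lambda>m \<in> M. g \<otimes>\<^bsub>AffGroup\<^esub> m \<otimes>\<^bsub>AffGroup\<^esub> inv\<^bsub>AffGroup\<^esub> g)"

text \<open>Omega: (a+A)_* |-> outer class of conjugation by a+A (for any representative a+A).\<close>
definition Omega :: "(real^2 \<Rightarrow> real^2) set \<Rightarrow> ((real^2) set \<Rightarrow> (real^2) set) \<Rightarrow> ((real^2 \<Rightarrow> real^2) \<Rightarrow> (real^2 \<Rightarrow> real^2)) set" where
  "Omega M \<phi> = Inn (MGroup M) #>\<^bsub>AutoGroup (MGroup M)\<^esub>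
      conjAut M (SOME g. g \<in> normalizerA M \<and> induced M g = \<phi>)"

end

theory Submission
  imports Defs
begin


lemma mv1: "((A::real^2^2) *v x) $ 1 = A$1$1 * x$1 + A$1$2 * x$2"
  by (simp add: matrix_vector_mult_def sum_2)
lemma mv2: "((A::real^2^2) *v x) $ 2 = A$2$1 * x$1 + A$2$2 * x$2"
  by (simp add: matrix_vector_mult_def sum_2)

lemma veq2: "(x::real^2) = y \<longleftrightarrow> x$1 = y$1 \<and> x$2 = y$2"
  by (simp add: vec_eq_iff forall_2)

lemma e1_c[simp]: "e1$1 = 1" "e1$2 = 0" by (simp_all add: e1_def axis_def)
lemma e2_c[simp]: "e2$1 = 0" "e2$2 = 1" by (simp_all add: e2_def axis_def)

lemma aff_comp: "aff a A \<circ> aff b B = aff (a + A *v b) (A ** B)"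
  by (simp add: aff_def fun_eq_iff matrix_vector_mul_assoc matrix_vector_right_distrib add.assoc)

lemma aff_id: "aff 0 (mat 1) = id" by (simp add: aff_def fun_eq_iff)

lemma carrier_Aff: "carrier AffGroup = {aff a A | a A. invertible A}" by (simp add: AffGroup_def)
lemma mult_Aff[simp]: "mult AffGroup = (\<circ>)" by (simp add: AffGroup_def)
lemma one_Aff[simp]: "one AffGroup = id" by (simp add: AffGroup_def)

lemma matrix_inv_props:
  assumes "invertible (A::real^2^2)"
  shows "A ** matrix_inv A = mat 1" "matrix_inv A ** A = mat 1"
  using someI_ex[OF assms[unfolded invertible_def]] unfolding matrix_inv_def by auto

lemma invertible_mat1: "invertible (mat 1 :: real^2^2)"
  unfolding invertible_def by (metis matrix_mul_lid)

lemma group_Aff: "group AffGroup"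
proof (rule groupI)
  fix x y assume "x \<in> carrier AffGroup" "y \<in> carrier AffGroup"
  then obtain a A b B where "x = aff a A" "invertible A" "y = aff b B" "invertible B"
    by (auto simp: carrier_Aff)
  then show "x \<otimes>\<^bsub>AffGroup\<^esub> y \<in> carrier AffGroup"
    unfolding carrier_Aff by (simp add: aff_comp) (blast intro: invertible_mult)
next
  show "\<one>\<^bsub>AffGroup\<^esub> \<in> carrier AffGroup"
  proof -
    have "id = aff 0 (mat 1) \<and> invertible (mat 1::real^2^2)" using aff_id invertible_mat1 by simp
    then show ?thesis unfolding carrier_Aff one_Aff by blast
  qed
next
  fix x y z show "x \<otimes>\<^bsub>AffGroup\<^esub> y \<otimes>\<^bsub>AffGroup\<^esub> z = x \<otimes>\<^bsub>AffGroup\<^esub> (y \<otimes>\<^bsub>AffGroup\<^esub> z)"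
    by (simp add: o_assoc)
next
  fix x show "\<one>\<^bsub>AffGroup\<^esub> \<otimes>\<^bsub>AffGroup\<^esub> x = x" by simp
next
  fix x assume "x \<in> carrier AffGroup"
  then obtain a A where x: "x = aff a A" and A: "invertible A" by (auto simp: carrier_Aff)
  let ?B = "matrix_inv A"
  have "invertible ?B" unfolding invertible_def using matrix_inv_props[OF A] by blast
  moreover have "aff (- (?B *v a)) ?B \<circ> x = id"
    unfolding x aff_comp using matrix_inv_props[OF A] aff_id
    by (simp add: matrix_vector_mul_assoc)
  ultimately show "\<exists>y\<in>carrier AffGroup. y \<otimes>\<^bsub>AffGroup\<^esub> x = \<one>\<^bsub>AffGroup\<^esub>"
    by (auto simp: carrier_Aff)
qed

interpretation AG: group AffGroup by (rule group_Aff)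

lemma Aff_inv_l: "f \<in> carrier AffGroup \<Longrightarrow> (inv\<^bsub>AffGroup\<^esub> f) (f x) = x"
  using AG.l_inv[of f] by (metis comp_apply id_apply mult_Aff one_Aff)
lemma Aff_inv_r: "f \<in> carrier AffGroup \<Longrightarrow> f ((inv\<^bsub>AffGroup\<^esub> f) x) = x"
  using AG.r_inv[of f] by (metis comp_apply id_apply mult_Aff one_Aff)

section \<open>Explicit M\<close>

definition Zv :: "(real^2) set" where "Zv = {v. v$1 \<in> \<int> \<and> v$2 \<in> \<int>}"
definition hm :: "real \<Rightarrow> real^2 \<Rightarrow> real^2 \<Rightarrow> real^2" where "hm s v = (\<lambda>x. s *\<^sub>R x + v)"
definition Mset :: "(real^2 \<Rightarrow> real^2) set" where
  "Mset = {hm s v | s v. (s = 1 \<or> s = -1) \<and> v \<in> Zv}"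

lemma hm_comp: "hm s v \<circ> hm t w = hm (s*t) (s *\<^sub>R w + v)"
  by (simp add: hm_def fun_eq_iff algebra_simps)

lemma hm_eq: "hm s v = hm t w \<longleftrightarrow> s = t \<and> v = w"
proof
  assume h: "hm s v = hm t w"
  have "v = w" using fun_cong[OF h, of 0] by (simp add: hm_def)
  moreover have "s = t" using fun_cong[OF h, of e1] \<open>v = w\<close> by (simp add: hm_def veq2)
  ultimately show "s = t \<and> v = w" by simp
qed simp

lemma hm_id: "hm 1 0 = id" by (simp add: hm_def fun_eq_iff)

lemma hm_carrier: "s \<noteq> 0 \<Longrightarrow> hm s v \<in> carrier AffGroup"
proof -
  assume s: "s \<noteq> 0"
  have "hm s v = aff v (s *\<^sub>R mat 1)"
    by (simp add: hm_def aff_def fun_eq_iff veq2 mv1 mv2 mat_def)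
  moreover have "invertible (s *\<^sub>R (mat 1::real^2^2))"
    by (rule scalar_invertible[OF s invertible_mat1])
  ultimately show ?thesis by (auto simp: carrier_Aff)
qed

lemma Zv_add: "v \<in> Zv \<Longrightarrow> w \<in> Zv \<Longrightarrow> v + w \<in> Zv" by (auto simp: Zv_def)
lemma Zv_scale: "v \<in> Zv \<Longrightarrow> (s = 1 \<or> s = -1) \<Longrightarrow> s *\<^sub>R v \<in> Zv" by (auto simp: Zv_def)

lemma Zv_neg: "v \<in> Zv \<Longrightarrow> - v \<in> Zv" by (auto simp: Zv_def)
lemma hm_in_Mset: "(s = 1 \<or> s = -1) \<Longrightarrow> v \<in> Zv \<Longrightarrow> hm s v \<in> Mset"
  unfolding Mset_def by blast

lemma hm_inv: "(s = 1 \<or> s = -1) \<Longrightarrow> inv\<^bsub>AffGroup\<^esub> (hm s v) = hm s (- (s *\<^sub>R v))"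
  apply (rule AG.inv_equality)
  by (auto simp: hm_comp hm_id hm_carrier)

lemma Mset_sub: "subgroup Mset AffGroup"
proof (rule AG.subgroupI)
  show "Mset \<subseteq> carrier AffGroup" by (auto simp: Mset_def intro!: hm_carrier)
  have "hm 1 0 \<in> Mset" unfolding Mset_def Zv_def by force
  then show "Mset \<noteq> {}" by blast
  fix a assume "a \<in> Mset"
  then obtain s v where "a = hm s v" "s=1 \<or> s=-1" "v \<in> Zv" by (auto simp: Mset_def)
  then show "inv\<^bsub>AffGroup\<^esub> a \<in> Mset"
    by (auto simp: hm_inv intro!: Zv_neg hm_in_Mset)
next
  fix a b assume "a \<in> Mset" "b \<in> Mset"
  then obtain s v t w where "a = hm s v" "s=1 \<or> s=-1" "v \<in> Zv" "b = hm t w" "t=1 \<or> t=-1" "w \<in> Zv"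
    by (auto simp: Mset_def)
  then show "a \<otimes>\<^bsub>AffGroup\<^esub> b \<in> Mset"
    by (auto simp: hm_comp intro!: Zv_add Zv_scale hm_in_Mset Zv_neg)
qed

lemma gens: "aff e1 (mat 1) = hm 1 e1" "aff e2 (mat 1) = hm 1 e2" "aff 0 (- mat 1) = hm (-1) 0"
  by (simp_all add: aff_def hm_def fun_eq_iff veq2 mv1 mv2 mat_def)

lemma e_Zv: "e1 \<in> Zv" "e2 \<in> Zv" "0 \<in> Zv" by (auto simp: Zv_def)

abbreviation "Sgen \<equiv> {aff e1 (mat 1), aff e2 (mat 1), aff 0 (- mat 1)}"

lemma Sgen_carrier: "Sgen \<subseteq> carrier AffGroup" using gens hm_carrier by auto

lemma Mp2_sub: "Mp2 \<subseteq> Mset"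
  unfolding Mp2_def by (rule AG.generate_subgroup_incl) (auto simp: gens e_Zv intro!: hm_in_Mset Mset_sub)

lemma Mp2_subgroup: "subgroup Mp2 AffGroup"
  unfolding Mp2_def by (rule AG.generate_is_subgroup[OF Sgen_carrier])

lemma Mset_sub2: "Mset \<subseteq> Mp2"
proof -
  have inc: "x \<in> Sgen \<Longrightarrow> x \<in> Mp2" for x unfolding Mp2_def by (rule generate.incl)
  have tr: "hm 1 (of_int n *\<^sub>R u) \<in> Mp2" if u: "hm 1 u \<in> Mp2" for n u
  proof (induct n rule: int_induct[where k=0])
    case base
    then show ?case using subgroup.one_closed[OF Mp2_subgroup] hm_id
      by (metis of_int_0 scaleR_zero_left one_Aff)
  next
    case (step1 i)
    have "hm 1 (of_int (i+1) *\<^sub>R u) = hm 1 u \<otimes>\<^bsub>AffGroup\<^esub> hm 1 (of_int i *\<^sub>R u)"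
      by (simp add: hm_comp algebra_simps)
    then show ?case using subgroup.m_closed[OF Mp2_subgroup u step1(2)] by metis
  next
    case (step2 i)
    have "hm 1 (of_int (i-1) *\<^sub>R u) = inv\<^bsub>AffGroup\<^esub> (hm 1 u) \<otimes>\<^bsub>AffGroup\<^esub> hm 1 (of_int i *\<^sub>R u)"
      by (simp add: hm_inv hm_comp algebra_simps)
    then show ?case using subgroup.m_closed[OF Mp2_subgroup subgroup.m_inv_closed[OF Mp2_subgroup u] step2(2)] by metis
  qed
  show ?thesis
  proof
    fix f assume "f \<in> Mset"
    then obtain s v where f: "f = hm s v" and s: "s = 1 \<or> s = -1" and v: "v \<in> Zv" by (auto simp: Mset_def)
    obtain n1 n2 where n: "v$1 = of_int n1" "v$2 = of_int n2" using v by (auto simp: Zv_def elim!: Ints_cases)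
    have "v = of_int n1 *\<^sub>R e1 + of_int n2 *\<^sub>R e2" using n by (simp add: veq2)
    then have "hm 1 v = hm 1 (of_int n1 *\<^sub>R e1) \<otimes>\<^bsub>AffGroup\<^esub> hm 1 (of_int n2 *\<^sub>R e2)"
      by (simp add: hm_comp add.commute)
    moreover have "hm 1 (of_int n1 *\<^sub>R e1) \<in> Mp2" "hm 1 (of_int n2 *\<^sub>R e2) \<in> Mp2"
      using tr inc gens by auto
    ultimately have t: "hm 1 v \<in> Mp2" using subgroup.m_closed[OF Mp2_subgroup] by metis
    have "hm (-1) v = hm 1 v \<otimes>\<^bsub>AffGroup\<^esub> hm (-1) 0" by (simp add: hm_comp)
    moreover have "hm (-1) 0 \<in> Mp2" using inc gens by auto
    ultimately have "hm (-1) v \<in> Mp2" using t subgroup.m_closed[OF Mp2_subgroup] by metis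
    then show "f \<in> Mp2" using s t f by auto
  qed
qed

lemma Mp2_eq: "Mp2 = Mset" using Mp2_sub Mset_sub2 by blast

section \<open>Kernel and centralizer\<close>

lemma small_lemma:
  fixes w u :: "real^2"
  assumes H: "\<forall>t::real. \<exists>s. (s = 1 \<or> s = -1) \<and> t *\<^sub>R (w - s *\<^sub>R u) \<in> Zv"
  shows "\<exists>s. (s = 1 \<or> s = -1) \<and> w = s *\<^sub>R u"
proof -
  define C where "C = 1 + \<bar>w$1\<bar> + \<bar>w$2\<bar> + \<bar>u$1\<bar> + \<bar>u$2\<bar>"
  have C: "C > 0" unfolding C_def by simp
  obtain s where s: "s = 1 \<or> s = -1" and z: "(1/C) *\<^sub>R (w - s *\<^sub>R u) \<in> Zv" using H by blast
  have lt: "\<bar>w$i - s * u$i\<bar> < C" if "i = 1 \<or> i = 2" for i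
    using s that unfolding C_def by (elim disjE; simp; arith)
  have eq: "w$i = s * u$i" if i: "i = 1 \<or> i = 2" for i
  proof -
    have "(1/C) * (w$i - s * u$i) \<in> \<int>" using z i by (auto simp: Zv_def)
    moreover have "\<bar>(1/C) * (w$i - s * u$i)\<bar> < 1"
      using lt[OF i] C by (simp add: abs_mult divide_simps)
    ultimately have "(1/C) * (w$i - s * u$i) = 0" by (rule Ints_nonzero_abs_less1)
    then show ?thesis using C by simp
  qed
  then have "w = s *\<^sub>R u" by (simp add: veq2)
  then show ?thesis using s by blast
qed

lemma aff_scale: "(A::real^2^2) *v (t *\<^sub>R u) = t *\<^sub>R (A *v u)"
  by (simp add: veq2 mv1 mv2 algebra_simps)

lemma kernel_Mset:
  assumes k: "k \<in> carrier AffGroup" and H: "\<forall>y. \<exists>m\<in>Mset. k y = m y"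
  shows "k \<in> Mset"
proof -
  obtain a A where kA: "k = aff a A" using k by (auto simp: carrier_Aff)
  have kap: "k y = a + A *v y" for y by (simp add: kA aff_def)
  have Hy: "\<exists>s v. (s=1 \<or> s=-1) \<and> v \<in> Zv \<and> k y = s *\<^sub>R y + v" for y
    using H[rule_format, of y] by (auto simp: Mset_def hm_def)
  have a: "a \<in> Zv" using Hy[of 0] by (auto simp: kap)
  have col: "\<exists>s. (s=1\<or>s=-1) \<and> A *v u = s *\<^sub>R u" for u
  proof (rule small_lemma, rule allI)
    fix t
    obtain s v where sv: "s=1 \<or> s=-1" "v \<in> Zv" "k (t *\<^sub>R u) = s *\<^sub>R (t *\<^sub>R u) + v"
      using Hy by blast
    then have "t *\<^sub>R (A *v u - s *\<^sub>R u) = v + - a"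
      by (simp add: kap aff_scale algebra_simps)
    moreover have "v + - a \<in> Zv" using sv a by (intro Zv_add Zv_neg)
    ultimately show "\<exists>s. (s = 1 \<or> s = -1) \<and> t *\<^sub>R (A *v u - s *\<^sub>R u) \<in> Zv" using sv by metis
  qed
  obtain s1 where s1: "s1=1\<or>s1=-1" "A *v e1 = s1 *\<^sub>R e1" using col by blast
  obtain s2 where s2: "s2=1\<or>s2=-1" "A *v e2 = s2 *\<^sub>R e2" using col by blast
  obtain s3 where s3: "s3=1\<or>s3=-1" "A *v (e1+e2) = s3 *\<^sub>R (e1+e2)" using col by blast
  have c: "A$1$1 = s1" "A$2$1 = 0" "A$1$2 = 0" "A$2$2 = s2" "A$1$1 + A$1$2 = s3" "A$2$1 + A$2$2 = s3"
    using s1(2) s2(2) s3(2) by (simp_all add: veq2 mv1 mv2)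
  have "k = hm s1 a" using c by (simp add: fun_eq_iff kap hm_def veq2 mv1 mv2 algebra_simps)
  then show ?thesis using s1(1) a by (simp add: hm_in_Mset)
qed

lemma central_Mset:
  assumes k: "k \<in> carrier AffGroup" and H: "\<forall>m\<in>Mset. k \<circ> m = m \<circ> k"
  shows "k = id"
proof -
  obtain a A where kA: "k = aff a A" using k by (auto simp: carrier_Aff)
  have kap: "k y = a + A *v y" for y by (simp add: kA aff_def)
  have "hm (-1) 0 \<in> Mset" "hm 1 e1 \<in> Mset" "hm 1 e2 \<in> Mset" using e_Zv by (auto intro: hm_in_Mset)
  then have "(k \<circ> hm (-1) 0) 0 = (hm (-1) 0 \<circ> k) 0" "(k \<circ> hm 1 e1) 0 = (hm 1 e1 \<circ> k) 0"
     "(k \<circ> hm 1 e2) 0 = (hm 1 e2 \<circ> k) 0" using H by auto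
  then have "a = - a" "a + A *v e1 = a + e1" "a + A *v e2 = a + e2"
    by (simp_all add: kap hm_def)
  then have c: "a$1 = 0" "a$2 = 0" "A$1$1 = 1" "A$2$1 = 0" "A$1$2 = 0" "A$2$2 = 1"
    by (simp_all add: veq2 mv1 mv2)
  show "k = id" using c by (simp add: fun_eq_iff kap veq2 mv1 mv2)
qed

section \<open>Automorphisms of M are induced by affine maps\<close>

lemma MGroup_simps[simp]: "carrier (MGroup M) = M" "mult (MGroup M) = (\<circ>)" "one (MGroup M) = id"
  by (simp_all add: MGroup_def AffGroup_def)

lemma mm2: "((A::real^2^2) ** B)$i$j = A$i$1 * B$1$j + A$i$2 * B$2$j"
  by (simp add: matrix_matrix_mult_def sum_2)

lemma meq2: "(A::real^2^2) = B \<longleftrightarrow> A$1$1 = B$1$1 \<and> A$1$2 = B$1$2 \<and> A$2$1 = B$2$1 \<and> A$2$2 = B$2$2"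
  by (auto simp: vec_eq_iff forall_2)

lemma Mset_cases: "m \<in> Mset \<Longrightarrow> (\<And>s v. m = hm s v \<Longrightarrow> s = 1 \<or> s = -1 \<Longrightarrow> v \<in> Zv \<Longrightarrow> P) \<Longrightarrow> P"
  by (auto simp: Mset_def)

lemma surj_Mset:
  assumes ph: "\<phi> \<in> auto (MGroup Mset)"
  shows "\<exists>g \<in> normalizerA Mset. \<phi> = conjAut Mset g"
proof -
  have phin: "\<phi> m \<in> Mset" if "m \<in> Mset" for m
    using ph that by (auto simp: auto_def hom_def)
  have phmult: "\<phi> (x \<circ> y) = \<phi> x \<circ> \<phi> y" if "x \<in> Mset" "y \<in> Mset" for x y
    using ph that by (auto simp: auto_def hom_def)
  have bij: "bij_betw \<phi> Mset Mset" and ext: "\<phi> \<in> extensional Mset"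
    using ph by (auto simp: auto_def Bij_def)
  have inj: "x = y" if "x \<in> Mset" "y \<in> Mset" "\<phi> x = \<phi> y" for x y
    using bij that by (auto simp: bij_betw_def inj_on_def)
  have idM: "id \<in> Mset" using hm_id e_Zv hm_in_Mset by metis
  have phid: "\<phi> id = id"
  proof -
    obtain s v where sv: "\<phi> id = hm s v" "s = 1 \<or> s = -1" using phin[OF idM] by (auto elim: Mset_cases)
    have "hm s v = hm s v \<circ> hm s v" using phmult[OF idM idM] sv by simp
    then have "s = s * s" "v = s *\<^sub>R v + v" by (auto simp: hm_comp hm_eq)
    then have "s = 1" "v = 0" using sv(2) by auto
    then show ?thesis using sv hm_id by simp
  qed
  have trans_img: "\<exists>c\<in>Zv. \<phi> (hm 1 u) = hm 1 c" if u: "u \<in> Zv" "u \<noteq> 0" for u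
  proof -
    have hu: "hm 1 u \<in> Mset" using u by (simp add: hm_in_Mset)
    obtain t c where tc: "\<phi> (hm 1 u) = hm t c" "t = 1 \<or> t = -1" "c \<in> Zv"
      using phin[OF hu] by (auto elim: Mset_cases)
    have "t = 1"
    proof (rule ccontr)
      assume "t \<noteq> 1" then have t: "t = -1" using tc by simp
      have "\<phi> (hm 1 u \<circ> hm 1 u) = id" using phmult[OF hu hu] tc t by (simp add: hm_comp hm_id)
      then have "hm 1 u \<circ> hm 1 u = id"
        using inj[of "hm 1 u \<circ> hm 1 u" id] phid idM hu subgroup.m_closed[OF Mset_sub hu hu] by simp
      then have "(hm 1 u \<circ> hm 1 u) 0 = 0" by simp
      then have "u + u = 0" by (simp add: hm_def)
      then show False using u(2) by (simp add: veq2)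
    qed
    then show ?thesis using tc by blast
  qed
  obtain c1 where c1: "c1 \<in> Zv" "\<phi> (hm 1 e1) = hm 1 c1" using trans_img[of e1] e_Zv by (auto simp: veq2)
  obtain c2 where c2: "c2 \<in> Zv" "\<phi> (hm 1 e2) = hm 1 c2" using trans_img[of e2] e_Zv by (auto simp: veq2)
  have r: "hm (-1) 0 \<in> Mset" using e_Zv by (simp add: hm_in_Mset)
  obtain b where b: "b \<in> Zv" "\<phi> (hm (-1) 0) = hm (-1) b"
  proof -
    obtain t c where tc: "\<phi> (hm (-1) 0) = hm t c" "t = 1 \<or> t = -1" "c \<in> Zv"
      using phin[OF r] by (auto elim: Mset_cases)
    have "t = -1"
    proof (rule ccontr)
      assume "t \<noteq> -1" then have t: "t = 1" using tc by simp
      have rr: "hm (-1) 0 \<circ> hm (-1) 0 = id" by (simp add: hm_comp hm_id)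
      have "\<phi> (hm (-1) 0) \<circ> \<phi> (hm (-1) 0) = id" using phmult[OF r r] rr phid by simp
      then have "(hm 1 c \<circ> hm 1 c) 0 = 0" using tc t by simp
      then have "c + c = 0" by (simp add: hm_def)
      then have "c = 0" by (simp add: veq2)
      then have "\<phi> (hm (-1) 0) = \<phi> id" using tc t phid hm_id by simp
      then have "hm (-1) 0 = id" using inj r idM by blast
      then show False using hm_id hm_eq[of "-1" 0 1 0] by simp
    qed
    then show ?thesis using tc that by blast
  qed
  define A :: "real^2^2" where "A = (\<chi> i j. if j = 1 then c1$i else c2$i)"
  have A: "A$1$1 = c1$1" "A$2$1 = c1$2" "A$1$2 = c2$1" "A$2$2 = c2$2" by (simp_all add: A_def)
  define a :: "real^2" where "a = (1/2) *\<^sub>R b"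
  define \<psi> where "\<psi> = (\<lambda>m::real^2\<Rightarrow>real^2. \<lambda>x. a + A *v (m 0) + (m (x - a) - m 0))"
  have psi_hm: "\<psi> (hm s v) = hm s (a + A *v v - s *\<^sub>R a)" for s v
    by (simp add: \<psi>_def hm_def fun_eq_iff algebra_simps)
  have psi_comp: "\<psi> (x \<circ> y) = \<psi> x \<circ> \<psi> y" if "x \<in> Mset" "y \<in> Mset" for x y
    using that
    by (auto elim!: Mset_cases simp: hm_comp psi_hm hm_eq veq2 mv1 mv2 algebra_simps)
  have psi_inv: "\<psi> (inv\<^bsub>AffGroup\<^esub> x) = inv\<^bsub>AffGroup\<^esub> (\<psi> x)" if "x \<in> Mset" for x
    using that
    by (auto elim!: Mset_cases simp: hm_inv psi_hm hm_eq veq2 mv1 mv2 algebra_simps)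
  have phinv: "\<phi> (inv\<^bsub>AffGroup\<^esub> x) = inv\<^bsub>AffGroup\<^esub> (\<phi> x)" if x: "x \<in> Mset" for x
  proof -
    have ix: "inv\<^bsub>AffGroup\<^esub> x \<in> Mset" using subgroup.m_inv_closed[OF Mset_sub x] .
    have xc: "x \<in> carrier AffGroup" "\<phi> x \<in> carrier AffGroup" "\<phi> (inv\<^bsub>AffGroup\<^esub> x) \<in> carrier AffGroup"
      using x ix phin subgroup.mem_carrier[OF Mset_sub] by auto
    have "\<phi> (inv\<^bsub>AffGroup\<^esub> x) \<circ> \<phi> x = id"
      using phmult[OF ix x] AG.l_inv[OF xc(1)] phid by simp
    then show ?thesis using AG.inv_equality[OF _ xc(2) xc(3)] by simp
  qed
  have agree: "\<phi> m = \<psi> m" if "m \<in> Mp2" for m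
    using that unfolding Mp2_def
  proof (induct m rule: generate.induct)
    case one
    have "\<psi> id = id" using psi_hm[of 1 0] hm_id by simp
    then show ?case using phid by (metis one_Aff)
  next
    case (incl h)
    then show ?case using c1 c2 b by (auto simp: gens psi_hm hm_eq veq2 mv1 mv2 A a_def)
  next
    case (inv h)
    then have hM: "h \<in> Mset" using gens e_Zv hm_in_Mset by auto
    have "\<phi> h = \<psi> h" using inv c1 c2 b by (auto simp: gens psi_hm hm_eq veq2 mv1 mv2 A a_def)
    then show ?case using phinv[OF hM] psi_inv[OF hM] by simp
  next
    case (eng h1 h2)
    then have h: "h1 \<in> Mset" "h2 \<in> Mset" using Mp2_eq Mp2_def by auto
    then show ?case using eng phmult[OF h] psi_comp[OF h] by (metis mult_Aff)
  qed
  have agreeM: "\<phi> m = \<psi> m" if "m \<in> Mset" for m using agree Mp2_eq that by auto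
  have imgM: "\<phi> ` Mset = Mset" using bij by (simp add: bij_betw_def)
  have pre: "\<exists>v. A *v v = u" if "u \<in> Zv" for u
  proof -
    have "hm 1 u \<in> \<phi> ` Mset" using imgM that hm_in_Mset by auto
    then obtain m where m: "m \<in> Mset" "\<phi> m = hm 1 u" by auto
    then obtain s v where "m = hm s v" by (auto elim: Mset_cases)
    then have "hm s (a + A *v v - s *\<^sub>R a) = hm 1 u" using m agreeM psi_hm by simp
    then have "A *v v = u" by (auto simp: hm_eq)
    then show ?thesis by blast
  qed
  obtain v where v: "A *v v = e1" using pre e_Zv by blast
  obtain w where w: "A *v w = e2" using pre e_Zv by blast
  define B :: "real^2^2" where "B = (\<chi> i j. if j = 1 then v$i else w$i)"
  have "A ** B = mat 1" using v w by (simp add: meq2 mm2 B_def veq2 mv1 mv2 mat_def)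
  then have invA: "invertible A" using invertible_right_inverse by blast
  define g where "g = aff a A"
  have gc: "g \<in> carrier AffGroup" using invA by (auto simp: g_def carrier_Aff)
  have conj: "g \<otimes>\<^bsub>AffGroup\<^esub> m \<otimes>\<^bsub>AffGroup\<^esub> inv\<^bsub>AffGroup\<^esub> g = \<phi> m" if m: "m \<in> Mset" for m
  proof -
    obtain s v where sv: "m = hm s v" using m by (auto elim: Mset_cases)
    have pm: "\<psi> m = hm s (a + A *v v - s *\<^sub>R a)" using sv psi_hm by simp
    have "g \<circ> hm s v = hm s (a + A *v v - s *\<^sub>R a) \<circ> g"
      by (simp add: g_def fun_eq_iff aff_def hm_def veq2 mv1 mv2 algebra_simps)
    then have "g \<circ> m = \<psi> m \<circ> g" unfolding sv pm[unfolded sv] .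
    then have "g \<circ> m \<circ> inv\<^bsub>AffGroup\<^esub> g = \<psi> m \<circ> (g \<circ> inv\<^bsub>AffGroup\<^esub> g)"
      by (metis o_assoc)
    also have "\<dots> = \<psi> m" using AG.r_inv[OF gc] by simp
    finally show ?thesis using agreeM[OF m] by simp
  qed
  have "(\<lambda>m. g \<otimes>\<^bsub>AffGroup\<^esub> m \<otimes>\<^bsub>AffGroup\<^esub> inv\<^bsub>AffGroup\<^esub> g) ` Mset = \<phi> ` Mset"
    using conj by (rule image_cong[OF refl])
  then have gN: "g \<in> normalizerA Mset" using gc imgM by (simp add: normalizerA_def)
  have "\<phi> = conjAut Mset g"
  proof
    fix x show "\<phi> x = conjAut Mset g x"
    proof (cases "x \<in> Mset")
      case True
      then have "conjAut Mset g x = g \<otimes>\<^bsub>AffGroup\<^esub> x \<otimes>\<^bsub>AffGroup\<^esub> inv\<^bsub>AffGroup\<^esub> g"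
        unfolding conjAut_def by (simp only: restrict_apply if_True)
      then show ?thesis using conj[OF True] by metis
    next
      case False
      then have "conjAut Mset g x = undefined"
        unfolding conjAut_def by (simp only: restrict_apply if_False)
      moreover have "\<phi> x = undefined" using ext False by (rule extensional_arb)
      ultimately show ?thesis by simp
    qed
  qed
  then show ?thesis using gN by blast
qed




lemma (in group) Aut_mult: "f \<in> auto G \<Longrightarrow> h \<in> auto G \<Longrightarrow> f \<otimes>\<^bsub>AutoGroup G\<^esub> h = compose (carrier G) f h"
  by (simp add: AutoGroup_def BijGroup_def auto_def)

lemma (in group) Aut_one: "\<one>\<^bsub>AutoGroup G\<^esub> = (\<lambda>x\<in>carrier G. x)"
  by (simp add: AutoGroup_def BijGroup_def)

lemma (in group) Aut_carrier: "carrier (AutoGroup G) = auto G"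
  by (simp add: AutoGroup_def)

definition iota :: "('a, 'b) monoid_scheme \<Rightarrow> 'a \<Rightarrow> ('a \<Rightarrow> 'a)" where
  "iota G h = (\<lambda>x\<in>carrier G. h \<otimes>\<^bsub>G\<^esub> x \<otimes>\<^bsub>G\<^esub> inv\<^bsub>G\<^esub> h)"

lemma (in group) canc: "h \<in> carrier G \<Longrightarrow> z \<in> carrier G \<Longrightarrow> inv h \<otimes> (h \<otimes> z) = z"
  by (simp add: m_assoc[symmetric])
lemma (in group) canc2: "h \<in> carrier G \<Longrightarrow> z \<in> carrier G \<Longrightarrow> h \<otimes> (inv h \<otimes> z) = z"
  by (simp add: m_assoc[symmetric])

lemma Inn_iota: "Inn G = iota G ` carrier G"
  by (auto simp: Inn_def iota_def)

lemma (in group) iota_auto: assumes h: "h \<in> carrier G" shows "iota G h \<in> auto G"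
proof -
  have hom: "iota G h \<in> hom G G"
    using h by (auto simp: hom_def iota_def m_assoc canc)
  have inj: "inj_on (iota G h) (carrier G)"
    using h by (auto simp: inj_on_def iota_def)
  have "x \<in> iota G h ` carrier G" if x: "x \<in> carrier G" for x
  proof
    show "x = iota G h (inv h \<otimes> x \<otimes> h)" using h x by (simp add: iota_def m_assoc canc2)
  qed (use h x in simp)
  then have "iota G h ` carrier G = carrier G" using h by (auto simp: iota_def)
  then show ?thesis using hom inj by (auto simp: auto_def Bij_def bij_betw_def iota_def)
qed

lemma (in group) iota_mult: assumes h: "h \<in> carrier G" and k: "k \<in> carrier G"
  shows "iota G h \<otimes>\<^bsub>AutoGroup G\<^esub> iota G k = iota G (h \<otimes> k)"
proof -
  have "compose (carrier G) (iota G h) (iota G k) = iota G (h \<otimes> k)"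
    using h k by (auto simp: compose_def iota_def fun_eq_iff m_assoc inv_mult_group)
  then show ?thesis using Aut_mult iota_auto h k by simp
qed

lemma (in group) iota_one: "iota G \<one> = \<one>\<^bsub>AutoGroup G\<^esub>"
  by (auto simp: iota_def Aut_one intro!: restrict_ext)

lemma (in group) iota_inv: assumes h: "h \<in> carrier G"
  shows "inv\<^bsub>AutoGroup G\<^esub> (iota G h) = iota G (inv h)"
proof -
  interpret A: group "AutoGroup G" by (rule AutoGroup)
  show ?thesis
  proof (rule A.inv_equality)
    show "iota G (inv h) \<otimes>\<^bsub>AutoGroup G\<^esub> iota G h = \<one>\<^bsub>AutoGroup G\<^esub>"
      using h by (simp add: iota_mult iota_one)
  qed (use h iota_auto Aut_carrier in auto)
qed

lemma (in group) Inn_normal: "Inn G \<lhd> AutoGroup G"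
proof -
  interpret A: group "AutoGroup G" by (rule AutoGroup)
  have sub: "subgroup (Inn G) (AutoGroup G)"
  proof (rule A.subgroupI)
    show "Inn G \<subseteq> carrier (AutoGroup G)" using iota_auto by (auto simp: Inn_iota Aut_carrier)
    show "Inn G \<noteq> {}" by (auto simp: Inn_iota)
    show "inv\<^bsub>AutoGroup G\<^esub> a \<in> Inn G" if "a \<in> Inn G" for a
      using that by (auto simp: Inn_iota iota_inv)
    show "a \<otimes>\<^bsub>AutoGroup G\<^esub> b \<in> Inn G" if "a \<in> Inn G" "b \<in> Inn G" for a b
      using that by (auto simp: Inn_iota iota_mult)
  qed
  have "\<phi> \<otimes>\<^bsub>AutoGroup G\<^esub> \<iota> \<otimes>\<^bsub>AutoGroup G\<^esub> inv\<^bsub>AutoGroup G\<^esub> \<phi> \<in> Inn G"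
    if ph: "\<phi> \<in> carrier (AutoGroup G)" and io: "\<iota> \<in> Inn G" for \<phi> \<iota>
  proof -
    obtain h where h: "h \<in> carrier G" "\<iota> = iota G h" using io by (auto simp: Inn_iota)
    have pa: "\<phi> \<in> auto G" using ph by (simp add: Aut_carrier)
    interpret gh: group_hom G G \<phi> using pa by (unfold_locales) (simp add: auto_def)
    have phc: "\<phi> h \<in> carrier G" using h pa by (auto simp: auto_def hom_def)
    have "compose (carrier G) \<phi> (iota G h) = compose (carrier G) (iota G (\<phi> h)) \<phi>"
      using h phc by (auto simp: compose_def iota_def fun_eq_iff)
    then have eq: "\<phi> \<otimes>\<^bsub>AutoGroup G\<^esub> \<iota> = iota G (\<phi> h) \<otimes>\<^bsub>AutoGroup G\<^esub> \<phi>"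
      using h pa phc iota_auto by (simp add: Aut_mult)
    have ic: "iota G (\<phi> h) \<in> carrier (AutoGroup G)" using iota_auto phc by (simp add: Aut_carrier)
    have "\<phi> \<otimes>\<^bsub>AutoGroup G\<^esub> \<iota> \<otimes>\<^bsub>AutoGroup G\<^esub> inv\<^bsub>AutoGroup G\<^esub> \<phi> = iota G (\<phi> h)"
      unfolding eq using ic ph by (simp add: A.m_assoc)
    then show ?thesis using phc by (simp add: Inn_iota)
  qed
  then show ?thesis using sub by (simp add: A.normal_inv_iff)
qed




abbreviation "NM \<equiv> normalizerA Mset"
abbreviation "MG \<equiv> MGroup Mset"
abbreviation "cA \<equiv> conjAut Mset"
abbreviation "ainv g \<equiv> inv\<^bsub>AffGroup\<^esub> g"

lemma MG_group: "group MG" unfolding MGroup_def by (rule AG.subgroup_imp_group[OF Mset_sub])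
lemma MG_inv: "m \<in> Mset \<Longrightarrow> inv\<^bsub>MG\<^esub> m = ainv m"
  unfolding MGroup_def by (rule AG.m_inv_consistent[OF Mset_sub])

lemma Mset_carrier: "m \<in> Mset \<Longrightarrow> m \<in> carrier AffGroup" using subgroup.mem_carrier[OF Mset_sub] .
lemma Mset_comp: "m \<in> Mset \<Longrightarrow> n \<in> Mset \<Longrightarrow> m \<circ> n \<in> Mset"
  using subgroup.m_closed[OF Mset_sub] by (metis mult_Aff)
lemma Mset_inv: "m \<in> Mset \<Longrightarrow> ainv m \<in> Mset"
  using subgroup.m_inv_closed[OF Mset_sub] .
lemma id_Mset: "id \<in> Mset" using subgroup.one_closed[OF Mset_sub] by simp
lemma ainv_carrier: "g \<in> carrier AffGroup \<Longrightarrow> ainv g \<in> carrier AffGroup" by (rule AG.inv_closed)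
lemma comp_carrier: "g \<in> carrier AffGroup \<Longrightarrow> h \<in> carrier AffGroup \<Longrightarrow> g \<circ> h \<in> carrier AffGroup"
  using AG.m_closed by (metis mult_Aff)
lemma ainv_comp: "g \<in> carrier AffGroup \<Longrightarrow> h \<in> carrier AffGroup \<Longrightarrow> ainv (g \<circ> h) = ainv h \<circ> ainv g"
  using AG.inv_mult_group by (metis mult_Aff)

lemma N_carrier: "g \<in> NM \<Longrightarrow> g \<in> carrier AffGroup" by (simp add: normalizerA_def)
lemma N_image: "g \<in> NM \<Longrightarrow> (\<lambda>m. g \<circ> m \<circ> ainv g) ` Mset = Mset" by (simp add: normalizerA_def)
lemma N_conj: "g \<in> NM \<Longrightarrow> m \<in> Mset \<Longrightarrow> g \<circ> m \<circ> ainv g \<in> Mset"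
  using N_image by blast

lemma Mset_N: assumes m: "m \<in> Mset" shows "m \<in> NM"
proof -
  have mc: "m \<in> carrier AffGroup" using m Mset_carrier by simp
  have "(\<lambda>x. m \<circ> x \<circ> ainv m) ` Mset = Mset"
  proof
    show "(\<lambda>x. m \<circ> x \<circ> ainv m) ` Mset \<subseteq> Mset" using m by (auto intro!: Mset_comp Mset_inv)
    show "Mset \<subseteq> (\<lambda>x. m \<circ> x \<circ> ainv m) ` Mset"
    proof
      fix x assume x: "x \<in> Mset"
      have "x = m \<circ> (ainv m \<circ> x \<circ> m) \<circ> ainv m" using mc by (simp add: fun_eq_iff Aff_inv_r)
      moreover have "ainv m \<circ> x \<circ> m \<in> Mset" using m x by (auto intro!: Mset_comp Mset_inv)
      ultimately show "x \<in> (\<lambda>x. m \<circ> x \<circ> ainv m) ` Mset" by blast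
    qed
  qed
  then show ?thesis using mc by (simp add: normalizerA_def)
qed

lemma N_mult: assumes g: "g \<in> NM" and h: "h \<in> NM" shows "g \<circ> h \<in> NM"
proof -
  have gc: "g \<in> carrier AffGroup" and hc: "h \<in> carrier AffGroup" using g h N_carrier by auto
  have "(\<lambda>m. (g \<circ> h) \<circ> m \<circ> ainv (g \<circ> h)) = (\<lambda>m. g \<circ> m \<circ> ainv g) \<circ> (\<lambda>m. h \<circ> m \<circ> ainv h)"
    using gc hc by (simp add: ainv_comp fun_eq_iff)
  then have "(\<lambda>m. (g \<circ> h) \<circ> m \<circ> ainv (g \<circ> h)) ` Mset = (\<lambda>m. g \<circ> m \<circ> ainv g) ` ((\<lambda>m. h \<circ> m \<circ> ainv h) ` Mset)"
    by (simp only: image_comp)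
  also have "\<dots> = Mset" using N_image[OF g] N_image[OF h] by simp
  finally have "(\<lambda>m. (g \<circ> h) \<circ> m \<circ> ainv (g \<circ> h)) ` Mset = Mset" .
  then show ?thesis using comp_carrier[OF gc hc] by (simp add: normalizerA_def)
qed

lemma cA_apply: "m \<in> Mset \<Longrightarrow> cA g m = g \<circ> m \<circ> ainv g" by (simp add: conjAut_def)

lemma cA_auto: assumes g: "g \<in> NM" shows "cA g \<in> auto MG"
proof -
  have gc: "g \<in> carrier AffGroup" using g N_carrier by auto
  have hom: "cA g \<in> hom MG MG"
  proof (rule homI)
    show "x \<in> carrier MG \<Longrightarrow> cA g x \<in> carrier MG" for x using g by (simp add: cA_apply N_conj)
    show "cA g (x \<otimes>\<^bsub>MG\<^esub> y) = cA g x \<otimes>\<^bsub>MG\<^esub> cA g y" if "x \<in> carrier MG" "y \<in> carrier MG" for x y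
      using that gc by (simp add: cA_apply Mset_comp fun_eq_iff Aff_inv_l)
  qed
  have inj: "inj_on (cA g) Mset"
  proof
    fix x y assume xy: "x \<in> Mset" "y \<in> Mset" "cA g x = cA g y"
    then have "g \<circ> x \<circ> ainv g = g \<circ> y \<circ> ainv g" by (simp add: cA_apply)
    then have "(g \<circ> x \<circ> ainv g) (g z) = (g \<circ> y \<circ> ainv g) (g z)" for z by simp
    then have "ainv g (g (x z)) = ainv g (g (y z))" for z using gc by (simp add: Aff_inv_l)
    then show "x = y" using gc by (simp add: Aff_inv_l fun_eq_iff)
  qed
  have "cA g ` Mset = (\<lambda>m. g \<circ> m \<circ> ainv g) ` Mset" by (rule image_cong) (simp_all add: cA_apply)
  then have "cA g ` Mset = Mset" using N_image[OF g] by simp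
  then show ?thesis using hom inj by (simp add: auto_def Bij_def bij_betw_def conjAut_def)
qed

lemma cA_comp: assumes g: "g \<in> NM" and h: "h \<in> NM" shows "cA (g \<circ> h) = compose Mset (cA g) (cA h)"
proof
  fix x
  have gc: "g \<in> carrier AffGroup" and hc: "h \<in> carrier AffGroup" using g h N_carrier by auto
  show "cA (g \<circ> h) x = compose Mset (cA g) (cA h) x"
  proof (cases "x \<in> Mset")
    case True
    have hx: "h \<circ> x \<circ> ainv h \<in> Mset" using N_conj[OF h True] .
    have "compose Mset (cA g) (cA h) x = g \<circ> (h \<circ> x \<circ> ainv h) \<circ> ainv g"
      using True hx by (simp add: compose_def cA_apply)
    moreover have "cA (g \<circ> h) x = (g \<circ> h) \<circ> x \<circ> (ainv h \<circ> ainv g)"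
      using True gc hc by (simp add: cA_apply ainv_comp)
    ultimately show ?thesis by (simp add: fun_eq_iff)
  next
    case False
    then show ?thesis by (simp add: compose_def conjAut_def)
  qed
qed

lemma Aut_MG_mult: "g \<in> NM \<Longrightarrow> h \<in> NM \<Longrightarrow> cA g \<otimes>\<^bsub>AutoGroup MG\<^esub> cA h = cA (g \<circ> h)"
  using group.Aut_mult[OF MG_group, of "cA g" "cA h"] cA_auto cA_comp by simp

lemma cA_inj: assumes g: "g \<in> NM" and h: "h \<in> NM" and eq: "cA g = cA h" shows "g = h"
proof -
  have gc: "g \<in> carrier AffGroup" and hc: "h \<in> carrier AffGroup" using g h N_carrier by auto
  define k where "k = ainv h \<circ> g"
  have kc: "k \<in> carrier AffGroup" unfolding k_def by (intro comp_carrier ainv_carrier hc gc)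
  have "\<forall>m\<in>Mset. k \<circ> m = m \<circ> k"
  proof
    fix m assume m: "m \<in> Mset"
    have "g \<circ> m \<circ> ainv g = h \<circ> m \<circ> ainv h" using eq m by (metis cA_apply)
    then have "(g \<circ> m \<circ> ainv g) (g y) = (h \<circ> m \<circ> ainv h) (g y)" for y by simp
    then have "g (m y) = h (m (k y))" for y using gc by (simp add: Aff_inv_l k_def)
    then have "ainv h (g (m y)) = ainv h (h (m (k y)))" for y by simp
    then have "ainv h (g (m y)) = m (k y)" for y using Aff_inv_l[OF hc] by simp
    then show "k \<circ> m = m \<circ> k" by (simp add: fun_eq_iff k_def)
  qed
  then have "k = id" using central_Mset kc by blast
  then have "ainv h (g y) = y" for y unfolding k_def by (metis comp_apply id_apply)
  then have "h (ainv h (g y)) = h y" for y by simp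
  then have "g y = h y" for y using Aff_inv_r[OF hc] by simp
  then show ?thesis by (simp add: fun_eq_iff)
qed

lemma Inn_MG: "Inn MG = cA ` Mset"
proof -
  have "(\<lambda>x\<in>Mset. h \<circ> x \<circ> inv\<^bsub>MG\<^esub> h) = cA h" if "h \<in> Mset" for h
    using that by (simp add: MG_inv conjAut_def)
  then have eq: "\<And>h. h \<in> Mset \<Longrightarrow> (\<lambda>x\<in>Mset. h \<circ> x \<circ> inv\<^bsub>MG\<^esub> h) = cA h" .
  have A: "f \<in> cA ` Mset" if f: "f \<in> Inn MG" for f
  proof -
    obtain h where "h \<in> Mset" "f = (\<lambda>x\<in>Mset. h \<circ> x \<circ> inv\<^bsub>MG\<^esub> h)"
      using f unfolding Inn_def by auto
    then show ?thesis using eq by blast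
  qed
  have B: "cA h \<in> Inn MG" if h: "h \<in> Mset" for h
  proof -
    have "(\<lambda>x\<in>Mset. h \<circ> x \<circ> inv\<^bsub>MG\<^esub> h) \<in> Inn MG" using h unfolding Inn_def by auto
    then show ?thesis using eq[OF h] by simp
  qed
  show ?thesis using A B by blast
qed


lemma cA_carrier: "g \<in> NM \<Longrightarrow> cA g \<in> carrier (AutoGroup MG)"
  using cA_auto by (simp add: AutoGroup_def)

lemma Inn_MG_normal: "Inn MG \<lhd> AutoGroup MG" by (rule group.Inn_normal[OF MG_group])
lemma Inn_MG_sub: "subgroup (Inn MG) (AutoGroup MG)" using Inn_MG_normal by (rule normal_imp_subgroup)
lemma Aut_MG_group: "group (AutoGroup MG)" by (rule group.AutoGroup[OF MG_group])

lemma coset_iff: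
  assumes g: "g \<in> NM" and h: "h \<in> NM"
  shows "(Inn MG #>\<^bsub>AutoGroup MG\<^esub> cA g = Inn MG #>\<^bsub>AutoGroup MG\<^esub> cA h) \<longleftrightarrow> g \<circ> ainv h \<in> Mset"
proof
  interpret A: group "AutoGroup MG" by (rule Aut_MG_group)
  have gc: "g \<in> carrier AffGroup" and hc: "h \<in> carrier AffGroup" using g h N_carrier by auto
  assume eq: "Inn MG #>\<^bsub>AutoGroup MG\<^esub> cA g = Inn MG #>\<^bsub>AutoGroup MG\<^esub> cA h"
  have "cA g \<in> Inn MG #>\<^bsub>AutoGroup MG\<^esub> cA g" by (rule A.rcos_self[OF cA_carrier[OF g] Inn_MG_sub])
  then have "cA g \<in> Inn MG #>\<^bsub>AutoGroup MG\<^esub> cA h" using eq by simp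
  then obtain i where i: "i \<in> Inn MG" "cA g = i \<otimes>\<^bsub>AutoGroup MG\<^esub> cA h" unfolding r_coset_def by blast
  then obtain m where m: "m \<in> Mset" "i = cA m" using Inn_MG by blast
  have mN: "m \<in> NM" using Mset_N m by simp
  have "cA g = cA (m \<circ> h)" using i m Aut_MG_mult[OF mN h] by simp
  then have gm: "g = m \<circ> h" using cA_inj[OF g N_mult[OF mN h]] by simp
  have "g \<circ> ainv h = m \<circ> (h \<circ> ainv h)" by (simp add: gm comp_assoc)
  also have "\<dots> = m" using AG.r_inv[OF hc] by simp
  finally show "g \<circ> ainv h \<in> Mset" using m by simp
next
  interpret A: group "AutoGroup MG" by (rule Aut_MG_group)
  have gc: "g \<in> carrier AffGroup" and hc: "h \<in> carrier AffGroup" using g h N_carrier by auto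
  assume gm: "g \<circ> ainv h \<in> Mset"
  define m where "m = g \<circ> ainv h"
  have mN: "m \<in> NM" using Mset_N gm m_def by simp
  have "m \<circ> h = g \<circ> (ainv h \<circ> h)" by (simp add: m_def comp_assoc)
  also have "\<dots> = g" using AG.l_inv[OF hc] by simp
  finally have mh: "m \<circ> h = g" .
  have "cA g = cA m \<otimes>\<^bsub>AutoGroup MG\<^esub> cA h" using Aut_MG_mult[OF mN h] mh by simp
  moreover have "cA m \<in> Inn MG" using Inn_MG gm m_def by blast
  ultimately have "cA g \<in> Inn MG #>\<^bsub>AutoGroup MG\<^esub> cA h" unfolding r_coset_def by blast
  then have "Inn MG #>\<^bsub>AutoGroup MG\<^esub> cA h = Inn MG #>\<^bsub>AutoGroup MG\<^esub> cA g"
    by (rule A.repr_independence[OF _ cA_carrier[OF h] Inn_MG_sub])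
  then show "Inn MG #>\<^bsub>AutoGroup MG\<^esub> cA g = Inn MG #>\<^bsub>AutoGroup MG\<^esub> cA h" by simp
qed

section \<open>Orbits and induced maps\<close>

abbreviation "orb \<equiv> orbitM Mset"

lemma orb_self: "x \<in> orb x"
proof -
  have "x = id x" by simp
  then show ?thesis using id_Mset unfolding orbitM_def by blast
qed

lemma orb_eq: assumes "y \<in> orb x" shows "orb y = orb x"
proof -
  obtain m where m: "m \<in> Mset" "y = m x" using assms by (auto simp: orbitM_def)
  have mc: "m \<in> carrier AffGroup" using m Mset_carrier by simp
  show ?thesis
  proof
    show "orb y \<subseteq> orb x"
    proof
      fix z assume "z \<in> orb y"
      then obtain n where n: "n \<in> Mset" "z = n y" by (auto simp: orbitM_def)
      then have "z = (n \<circ> m) x" using m by simp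
      moreover have "n \<circ> m \<in> Mset" using m n Mset_comp by simp
      ultimately show "z \<in> orb x" unfolding orbitM_def by blast
    qed
    show "orb x \<subseteq> orb y"
    proof
      fix z assume "z \<in> orb x"
      then obtain n where n: "n \<in> Mset" "z = n x" by (auto simp: orbitM_def)
      then have "z = (n \<circ> ainv m) y" using m Aff_inv_l[OF mc] by simp
      moreover have "n \<circ> ainv m \<in> Mset" using m n Mset_comp Mset_inv by simp
      ultimately show "z \<in> orb y" unfolding orbitM_def by blast
    qed
  qed
qed

lemma orb_in: "orb x \<in> Orbits Mset" by (simp add: Orbits_def)

lemma induced_orb: assumes g: "g \<in> NM" shows "induced Mset g (orb x) = orb (g x)"
proof -
  have gc: "g \<in> carrier AffGroup" using g N_carrier by simp
  define y where "y = (SOME y. y \<in> orb x)"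
  have "y \<in> orb x" unfolding y_def using orb_self by (rule someI)
  then obtain m where m: "m \<in> Mset" "y = m x" by (auto simp: orbitM_def)
  have "g y = (g \<circ> m \<circ> ainv g) (g x)" using m Aff_inv_l[OF gc] by simp
  moreover have "g \<circ> m \<circ> ainv g \<in> Mset" using N_conj[OF g m(1)] .
  ultimately have "g y \<in> orb (g x)" unfolding orbitM_def by blast
  then have "orb (g y) = orb (g x)" by (rule orb_eq)
  then show ?thesis using orb_in by (simp add: induced_def y_def)
qed

lemma Orbits_cases: "Q \<in> Orbits Mset \<Longrightarrow> (\<And>x. Q = orb x \<Longrightarrow> P) \<Longrightarrow> P"
  by (auto simp: Orbits_def)

lemma induced_out: "Q \<notin> Orbits Mset \<Longrightarrow> induced Mset g Q = undefined"
  by (simp add: induced_def)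

lemma induced_in: "g \<in> NM \<Longrightarrow> Q \<in> Orbits Mset \<Longrightarrow> induced Mset g Q \<in> Orbits Mset"
  by (auto elim!: Orbits_cases simp: induced_orb orb_in)

lemma induced_comp: assumes g: "g \<in> NM" and h: "h \<in> NM"
  shows "compose (Orbits Mset) (induced Mset g) (induced Mset h) = induced Mset (g \<circ> h)"
proof
  fix Q show "compose (Orbits Mset) (induced Mset g) (induced Mset h) Q = induced Mset (g \<circ> h) Q"
  proof (cases "Q \<in> Orbits Mset")
    case True
    then obtain x where x: "Q = orb x" by (auto elim: Orbits_cases)
    show ?thesis using True x g h N_mult[OF g h] by (simp add: compose_def induced_orb)
  next
    case False
    then show ?thesis by (simp add: compose_def induced_out)
  qed
qed

lemma induced_iff: assumes g: "g \<in> NM" and h: "h \<in> NM"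
  shows "induced Mset g = induced Mset h \<longleftrightarrow> g \<circ> ainv h \<in> Mset"
proof
  have gc: "g \<in> carrier AffGroup" and hc: "h \<in> carrier AffGroup" using g h N_carrier by auto
  assume eq: "induced Mset g = induced Mset h"
  have o: "orb (g x) = orb (h x)" for x using eq induced_orb[OF g, of x] induced_orb[OF h, of x] by simp
  define k where "k = g \<circ> ainv h"
  have kc: "k \<in> carrier AffGroup" unfolding k_def by (intro comp_carrier ainv_carrier gc hc)
  have "\<forall>y. \<exists>m\<in>Mset. k y = m y"
  proof
    fix y
    have "orb (k y) = orb y" using o[of "ainv h y"] Aff_inv_r[OF hc] by (simp add: k_def)
    then have "k y \<in> orb y" using orb_self[of "k y"] by simp
    then show "\<exists>m\<in>Mset. k y = m y" by (auto simp: orbitM_def)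
  qed
  then show "g \<circ> ainv h \<in> Mset" using kernel_Mset[OF kc] k_def by simp
next
  have gc: "g \<in> carrier AffGroup" and hc: "h \<in> carrier AffGroup" using g h N_carrier by auto
  assume k: "g \<circ> ainv h \<in> Mset"
  show "induced Mset g = induced Mset h"
  proof
    fix Q show "induced Mset g Q = induced Mset h Q"
    proof (cases "Q \<in> Orbits Mset")
      case True
      then obtain x where x: "Q = orb x" by (auto elim: Orbits_cases)
      have "g x = (g \<circ> ainv h) (h x)" using Aff_inv_l[OF hc] by simp
      then have "g x \<in> orb (h x)" using k unfolding orbitM_def by blast
      then have "orb (g x) = orb (h x)" by (rule orb_eq)
      then show ?thesis using x induced_orb[OF g] induced_orb[OF h] by simp
    next
      case False
      then show ?thesis by (simp add: induced_out)
    qed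
  qed
qed

lemma Omega_induced: assumes g: "g \<in> NM"
  shows "Omega Mset (induced Mset g) = Inn MG #>\<^bsub>AutoGroup MG\<^esub> cA g"
proof -
  define g' where "g' = (SOME g'. g' \<in> NM \<and> induced Mset g' = induced Mset g)"
  have "g' \<in> NM \<and> induced Mset g' = induced Mset g" unfolding g'_def by (rule someI[of _ g]) (use g in simp)
  then have g': "g' \<in> NM" "induced Mset g' = induced Mset g" by auto
  then have "g' \<circ> ainv g \<in> Mset" using induced_iff[OF g' (1) g] by simp
  then have "Inn MG #>\<^bsub>AutoGroup MG\<^esub> cA g' = Inn MG #>\<^bsub>AutoGroup MG\<^esub> cA g"
    using coset_iff[OF g'(1) g] by simp
  then show ?thesis by (simp add: Omega_def g'_def)
qed


theorem main_Mset: "Omega Mset \<in> iso (AffOrb Mset) (Out MG)"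
proof -
  interpret A: group "AutoGroup MG" by (rule Aut_MG_group)
  interpret NI: normal "Inn MG" "AutoGroup MG" by (rule Inn_MG_normal)
  have cOut: "carrier (Out MG) = RCOSETS (AutoGroup MG) (Inn MG)" by (simp add: Out_def FactGroup_def)
  have mOut: "mult (Out MG) = set_mult (AutoGroup MG)" by (simp add: Out_def FactGroup_def)
  have cAff: "carrier (AffOrb Mset) = induced Mset ` NM" by (simp add: AffOrb_def)
  have mAff: "x \<otimes>\<^bsub>AffOrb Mset\<^esub> y = compose (Orbits Mset) x y" for x y by (simp add: AffOrb_def)
  have Isub: "Inn MG \<subseteq> carrier (AutoGroup MG)" using Inn_MG_sub by (rule subgroup.subset)
  have inC: "Omega Mset (induced Mset g) \<in> carrier (Out MG)" if g: "g \<in> NM" for g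
    using Omega_induced[OF g] A.rcosetsI[OF Isub cA_carrier[OF g]] cOut by simp
  have hom: "Omega Mset \<in> hom (AffOrb Mset) (Out MG)"
  proof (rule homI)
    fix x assume "x \<in> carrier (AffOrb Mset)"
    then show "Omega Mset x \<in> carrier (Out MG)" using cAff inC by auto
  next
    fix x y assume "x \<in> carrier (AffOrb Mset)" "y \<in> carrier (AffOrb Mset)"
    then obtain g h where g: "g \<in> NM" "x = induced Mset g" and h: "h \<in> NM" "y = induced Mset h"
      using cAff by auto
    have "x \<otimes>\<^bsub>AffOrb Mset\<^esub> y = induced Mset (g \<circ> h)" using g h induced_comp mAff by simp
    then have "Omega Mset (x \<otimes>\<^bsub>AffOrb Mset\<^esub> y) = Inn MG #>\<^bsub>AutoGroup MG\<^esub> (cA g \<otimes>\<^bsub>AutoGroup MG\<^esub> cA h)"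
      using Omega_induced[OF N_mult[OF g(1) h(1)]] Aut_MG_mult[OF g(1) h(1)] by simp
    also have "\<dots> = set_mult (AutoGroup MG) (Inn MG #>\<^bsub>AutoGroup MG\<^esub> cA g) (Inn MG #>\<^bsub>AutoGroup MG\<^esub> cA h)"
      using NI.rcos_sum[OF cA_carrier[OF g(1)] cA_carrier[OF h(1)]] by simp
    also have "\<dots> = Omega Mset x \<otimes>\<^bsub>Out MG\<^esub> Omega Mset y"
      using g h Omega_induced mOut by simp
    finally show "Omega Mset (x \<otimes>\<^bsub>AffOrb Mset\<^esub> y) = Omega Mset x \<otimes>\<^bsub>Out MG\<^esub> Omega Mset y" .
  qed
  have inj: "inj_on (Omega Mset) (carrier (AffOrb Mset))"
  proof
    fix x y assume x: "x \<in> carrier (AffOrb Mset)" and y: "y \<in> carrier (AffOrb Mset)"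
      and eq: "Omega Mset x = Omega Mset y"
    obtain g h where g: "g \<in> NM" "x = induced Mset g" and h: "h \<in> NM" "y = induced Mset h"
      using x y cAff by auto
    have "Inn MG #>\<^bsub>AutoGroup MG\<^esub> cA g = Inn MG #>\<^bsub>AutoGroup MG\<^esub> cA h"
      using eq g h Omega_induced by simp
    then have "g \<circ> ainv h \<in> Mset" using coset_iff[OF g(1) h(1)] by simp
    then show "x = y" using induced_iff[OF g(1) h(1)] g h by simp
  qed
  have surj: "Omega Mset ` carrier (AffOrb Mset) = carrier (Out MG)"
  proof
    show "Omega Mset ` carrier (AffOrb Mset) \<subseteq> carrier (Out MG)" using cAff inC by auto
    show "carrier (Out MG) \<subseteq> Omega Mset ` carrier (AffOrb Mset)"
    proof
      fix R assume "R \<in> carrier (Out MG)"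
      then obtain \<phi> where ph: "\<phi> \<in> carrier (AutoGroup MG)" "R = Inn MG #>\<^bsub>AutoGroup MG\<^esub> \<phi>"
        using cOut unfolding RCOSETS_def by auto
      have "\<phi> \<in> auto MG" using ph by (simp add: AutoGroup_def)
      then obtain g where g: "g \<in> NM" "\<phi> = cA g" using surj_Mset by blast
      have "R = Omega Mset (induced Mset g)" using ph g Omega_induced by simp
      then show "R \<in> Omega Mset ` carrier (AffOrb Mset)" using g cAff by auto
    qed
  qed
  show ?thesis using hom inj surj by (simp add: iso_def bij_betw_def)
qed

theorem lemma19:
  shows "Omega Mp2 \<in> iso (AffOrb Mp2) (Out (MGroup Mp2))"
  unfolding Mp2_eq by (rule main_Mset)


end
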